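(* Let $f : \widehat{\mathbb{Z}} \to \widehat{\mathbb{Z}}$ be congruence preserving and $p$ a prime number. The following are equivalent: (i) $\lambda_f(p) \ne p$. (ii) The reduction $f_p : \mathbb{Z}/p\mathbb{Z} \to \mathbb{Z}/p\mathbb{Z}$ is not a cyclic permutation of length $p$. (iii) For every $x \in \mathbb{Z}/p\mathbb{Z}$, the cycle length $l_x$ of $f_p$ on $x$ satisfies $l_x < p$. (iv) $\alpha(\lambda_f(p)) < p$.
   Context: $\widehat{\mathbb{Z}} = \varprojlim_n \mathbb{Z}/n\mathbb{Z}$; $s\equiv_n t$ means $s-t\in n\widehat{\mathbb{Z}}$. A continuous $f$ is congruence preserving if $s\equiv_n t$ implies $f(s)\equiv_n f(t)$ for all $s,t\in\widehat{\mathbb{Z}}$, $n\ge1$; it then induces reductions $f_n:\mathbb{Z}/n\mathbb{Z}\to\mathbb{Z}/n\mathbb{Z}$. For $x \in \mathbb{Z}/n\mathbb{Z}$, the cycle length $l_x$ of $f_n$ on $x$ is the least $l\ge1$ such that $f_n^k(x)=f_n^{k+l}(x)$ for some $k\ge0$; $\lambda_f(n)$, the period of $f_n$, is the least common multiple of all $l_x$. A cyclic permutation of length $p$ means a permutation of $\mathbb{Z}/p\mathbb{Z}$ consisting of a single cycle through all $p$ elements. $\alpha(m)$ denotes the largest prime-power divisor of the positive integer $m$ (with $\alpha(1)=1$). *)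

theory Defs
  imports "HOL-Number_Theory.Number_Theory"
begin

text \<open>The profinite integers as the inverse limit of the rings Z/nZ (n >= 1):
  compatible families of residues x n in {0..<n}; the unused index 0 is fixed to 0.\<close>

definition zhat_set :: "(nat \<Rightarrow> int) set" where
  "zhat_set = {x. x 0 = 0 \<and> (\<forall>n>0. 0 \<le> x n \<and> x n < int n \<and>
                    (\<forall>m>0. n dvd m \<longrightarrow> x m mod int n = x n))}"

typedef zhat = zhat_set
  by (rule exI[of _ "\<lambda>_. 0"]) (simp add: zhat_set_def)

definition zhat_minus :: "zhat \<Rightarrow> zhat \<Rightarrow> zhat" where
  "zhat_minus s t = Abs_zhat (\<lambda>k. (Rep_zhat s k - Rep_zhat t k) mod int k)"

definition zhat_scale :: "nat \<Rightarrow> zhat \<Rightarrow> zhat" where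
  "zhat_scale n u = Abs_zhat (\<lambda>k. (int n * Rep_zhat u k) mod int k)"

definition zhat_of_int :: "int \<Rightarrow> zhat" where
  "zhat_of_int a = Abs_zhat (\<lambda>k. if k = 0 then 0 else a mod int k)"

definition zhat_cong :: "nat \<Rightarrow> zhat \<Rightarrow> zhat \<Rightarrow> bool" where
  "zhat_cong n s t \<longleftrightarrow> (\<exists>u. zhat_minus s t = zhat_scale n u)"

text \<open>Continuity w.r.t. the profinite topology (basic open sets are the classes mod n).\<close>
definition zhat_continuous :: "(zhat \<Rightarrow> zhat) \<Rightarrow> bool" where
  "zhat_continuous f \<longleftrightarrow>
     (\<forall>s n. n \<ge> 1 \<longrightarrow> (\<exists>m\<ge>1. \<forall>t. zhat_cong m t s \<longrightarrow> zhat_cong n (f t) (f s)))"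

definition cong_preserving :: "(zhat \<Rightarrow> zhat) \<Rightarrow> bool" where
  "cong_preserving f \<longleftrightarrow>
     (\<forall>n s t. n \<ge> 1 \<longrightarrow> zhat_cong n s t \<longrightarrow> zhat_cong n (f s) (f t))"

text \<open>Reduction f_n : Z/nZ \<rightarrow> Z/nZ, with Z/nZ represented as {0..<n}.\<close>
definition reduction :: "(zhat \<Rightarrow> zhat) \<Rightarrow> nat \<Rightarrow> nat \<Rightarrow> nat" where
  "reduction f n x = nat (Rep_zhat (f (zhat_of_int (int x))) n)"

definition cycle_len :: "(nat \<Rightarrow> nat) \<Rightarrow> nat \<Rightarrow> nat" where
  "cycle_len g x = (LEAST l. l \<ge> 1 \<and> (\<exists>k. (g ^^ k) x = (g ^^ (k + l)) x))"

definition period :: "(zhat \<Rightarrow> zhat) \<Rightarrow> nat \<Rightarrow> nat" where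
  "period f n = Lcm ((cycle_len (reduction f n)) ` {0..<n})"

definition cyclic_perm :: "(nat \<Rightarrow> nat) \<Rightarrow> nat \<Rightarrow> bool" where
  "cyclic_perm g p \<longleftrightarrow> bij_betw g {0..<p} {0..<p} \<and>
     (\<forall>x\<in>{0..<p}. \<forall>y\<in>{0..<p}. \<exists>k. (g ^^ k) x = y)"

definition alpha :: "nat \<Rightarrow> nat" where
  "alpha m = Max {q. q dvd m \<and> (q = 1 \<or> primepow q)}"

end

theory Submission
  imports Defs
begin

lemma funpow_lt:
  assumes M: "\<forall>y<p. g y < (p::nat)" and "x < p"
  shows "(g ^^ n) x < p"
  using assms by (induction n) auto

lemma funpow_period:
  assumes "(g ^^ l) x = x"
  shows "(g ^^ (l * q + r)) x = (g ^^ r) x"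
proof (induction q)
  case 0 then show ?case by simp
next
  case (Suc q)
  have "l * Suc q + r = (l * q + r) + l" by simp
  then have "(g ^^ (l * Suc q + r)) x = (g ^^ (l * q + r)) ((g ^^ l) x)"
    by (simp only: funpow_add comp_def)
  with assms Suc show ?case by simp
qed

lemma funpow_mod:
  assumes "(g ^^ l) x = x"
  shows "(g ^^ n) x = (g ^^ (n mod l)) x"
  using funpow_period[OF assms, of "n div l" "n mod l"] by simp

lemma cycle_len_prop:
  assumes "l \<ge> 1" "(g ^^ k) x = (g ^^ (k + l)) x"
  shows "cycle_len g x \<ge> 1 \<and> (\<exists>k. (g ^^ k) x = (g ^^ (k + cycle_len g x)) x) \<and> cycle_len g x \<le> l"
proof -
  let ?P = "\<lambda>l. l \<ge> 1 \<and> (\<exists>k. (g ^^ k) x = (g ^^ (k + l)) x)"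
  have "?P l" using assms by blast
  then have "?P (Least ?P)" "Least ?P \<le> l" by (rule LeastI[of ?P], rule Least_le[of ?P])
  then show ?thesis unfolding cycle_len_def by blast
qed

lemma cycle_len_bound:
  assumes M: "\<forall>y<p. g y < (p::nat)" and x: "x < p"
  shows "cycle_len g x \<ge> 1 \<and> (\<exists>k. (g ^^ k) x = (g ^^ (k + cycle_len g x)) x) \<and> cycle_len g x \<le> p"
proof -
  let ?h = "\<lambda>n. (g ^^ n) x"
  have "\<not> inj_on ?h {0..p}"
  proof
    assume "inj_on ?h {0..p}"
    then have "card (?h ` {0..p}) = p + 1" by (simp add: card_image)
    moreover have "?h ` {0..p} \<subseteq> {0..<p}" using funpow_lt[OF M x] by auto
    then have "card (?h ` {0..p}) \<le> p" using card_mono[of "{0..<p}"] by fastforce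
    ultimately show False by simp
  qed
  then obtain i j where ij: "i \<in> {0..p}" "j \<in> {0..p}" "i \<noteq> j" "?h i = ?h j"
    unfolding inj_on_def by blast
  then obtain a b where ab: "a < b" "b \<le> p" "?h a = ?h b"
    by (metis atLeastAtMost_iff linorder_neqE_nat)
  have eqab: "(g ^^ a) x = (g ^^ (a + (b - a))) x" using ab by simp
  have "1 \<le> b - a" using ab by simp
  from cycle_len_prop[OF this eqab] ab show ?thesis by auto
qed

lemma len_p_cyclic:
  assumes M: "\<forall>y<p. g y < (p::nat)" and x: "x < p" and L: "cycle_len g x = p"
  shows "cyclic_perm g p"
proof -
  let ?h = "\<lambda>n. (g ^^ n) x"
  let ?A = "{0..<p}"
  have inj: "inj_on ?h ?A"
  proof (rule ccontr)
    assume "\<not> inj_on ?h ?A"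
    then obtain i j where ij: "i \<in> ?A" "j \<in> ?A" "i \<noteq> j" "?h i = ?h j"
      unfolding inj_on_def by blast
    then obtain a b where ab: "a < b" "b < p" "?h a = ?h b"
      by (metis atLeastLessThan_iff linorder_neqE_nat)
    have eqab: "(g ^^ a) x = (g ^^ (a + (b - a))) x" using ab by simp
    have "1 \<le> b - a" using ab by simp
    from cycle_len_prop[OF this eqab] ab L show False by auto
  qed
  have sub: "?h ` ?A \<subseteq> ?A" using funpow_lt[OF M x] by auto
  have img: "?h ` ?A = ?A"
    using card_subset_eq[OF _ sub] inj by (simp add: card_image)
  have "?h p \<in> ?h ` ?A" using funpow_lt[OF M x] img by auto
  then obtain j where j: "j < p" "?h p = ?h j" by auto
  have j0: "j = 0"
  proof (rule ccontr)
    assume "j \<noteq> 0"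
    have eqj: "(g ^^ j) x = (g ^^ (j + (p - j))) x" using j by simp
    have "1 \<le> p - j" using j by simp
    from cycle_len_prop[OF this eqj] j L \<open>j \<noteq> 0\<close> show False by auto
  qed
  then have per: "(g ^^ p) x = x" using j by simp
  have surj: "g ` ?A = ?A"
  proof
    show "g ` ?A \<subseteq> ?A" using M by auto
    show "?A \<subseteq> g ` ?A"
    proof
      fix y assume "y \<in> ?A"
      then have "y \<in> ?h ` ?A" using img by simp
      then obtain i where i: "i < p" "y = ?h i" by auto
      have "y = ?h (i + p)" using funpow_mod[OF per, of "i+p"] i by simp
      also have "\<dots> = g (?h (i + p - 1))"
      proof -
        have "i + p = Suc (i + p - 1)" using i by simp
        then show ?thesis by (metis comp_apply funpow.simps(2))
      qed
      finally show "y \<in> g ` ?A" using funpow_lt[OF M x] by auto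
    qed
  qed
  have bij: "bij_betw g ?A ?A"
    unfolding bij_betw_def using surj finite_surj_inj[of ?A g] by auto
  have reach: "\<forall>y\<in>?A. \<forall>z\<in>?A. \<exists>k. (g ^^ k) y = z"
  proof (intro ballI)
    fix y z assume "y \<in> ?A" "z \<in> ?A"
    then have "y \<in> ?h ` ?A" "z \<in> ?h ` ?A" using img by simp_all
    then obtain i j where "i < p" "y = ?h i" "j < p" "z = ?h j" by auto
    have "(g ^^ (j + p - i)) y = ?h ((j + p - i) + i)" using \<open>y = ?h i\<close>
      by (simp add: funpow_add)
    also have "\<dots> = ?h (j + p)" using \<open>i < p\<close> by simp
    also have "\<dots> = z" using funpow_mod[OF per, of "j+p"] \<open>j < p\<close> \<open>z = ?h j\<close> by simp
    finally show "\<exists>k. (g ^^ k) y = z" by blast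
  qed
  show ?thesis unfolding cyclic_perm_def using bij reach by blast
qed

lemma cyclic_len_p:
  assumes C: "cyclic_perm g p" and x: "x < p"
  shows "cycle_len g x = p"
proof -
  let ?A = "{0..<p}"
  have bij: "bij_betw g ?A ?A" and reach: "\<forall>y\<in>?A. \<forall>z\<in>?A. \<exists>k. (g ^^ k) y = z"
    using C unfolding cyclic_perm_def by blast+
  have M: "\<forall>y<p. g y < p" using bij by (auto simp: bij_betw_def)
  let ?l = "cycle_len g x"
  from cycle_len_bound[OF M x] obtain k where k: "(g ^^ k) x = (g ^^ (k + ?l)) x"
    and le: "?l \<le> p" and ge: "?l \<ge> 1" by blast
  have k2: "(g ^^ k) x = (g ^^ k) ((g ^^ ?l) x)" using k by (simp add: funpow_add)
  have inj: "inj_on (g ^^ k) ?A" using bij_betw_funpow[OF bij] bij_betw_imp_inj_on by blast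
  have "(g ^^ ?l) x \<in> ?A" using funpow_lt[OF M x] by simp
  then have per: "(g ^^ ?l) x = x" using inj_onD[OF inj k2] x by simp
  have sub: "?A \<subseteq> (\<lambda>i. (g ^^ i) x) ` {0..<?l}"
  proof
    fix y assume y: "y \<in> ?A"
    have "x \<in> ?A" using x by simp
    then obtain n where n: "(g ^^ n) x = y" using reach y by blast
    then have "y = (g ^^ (n mod ?l)) x" using funpow_mod[OF per, of n] by simp
    moreover have "n mod ?l < ?l" using ge by simp
    ultimately show "y \<in> (\<lambda>i. (g ^^ i) x) ` {0..<?l}" by auto
  qed
  have "p \<le> card ((\<lambda>i. (g ^^ i) x) ` {0..<?l})" using card_mono[OF _ sub] by simp
  also have "\<dots> \<le> ?l" using card_image_le[of "{0..<?l}" "\<lambda>i. (g ^^ i) x"] by simp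
  finally show ?thesis using le by simp
qed

lemma pp_dvd_Lcm:
  fixes C :: "nat set"
  assumes "finite C" "0 \<notin> C" "prime r" "k > 0" "r ^ k dvd Lcm C"
  shows "\<exists>c\<in>C. r ^ k dvd c"
  using assms
proof (induction C rule: finite_induct)
  case empty
  then have "r ^ k = 1" by simp
  moreover have "1 < r ^ k" using empty prime_gt_1_nat one_less_power by blast
  ultimately show ?case by linarith
next
  case (insert a B)
  have a0: "a \<noteq> 0" using insert by auto
  have L0: "Lcm B \<noteq> 0" using insert Lcm_0_iff[of B] by auto
  have "r > 1" using insert(5) prime_gt_1_nat by blast
  then have nu: "\<not> is_unit r" by simp
  have "r ^ k dvd lcm a (Lcm B)" using insert by simp
  then have "k \<le> multiplicity r (lcm a (Lcm B))"
    using power_dvd_iff_le_multiplicity[of "lcm a (Lcm B)" r k] a0 L0 nu by simp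
  also have "\<dots> = max (multiplicity r a) (multiplicity r (Lcm B))"
    using multiplicity_lcm[OF a0 L0 insert(5)] .
  finally have "k \<le> multiplicity r a \<or> k \<le> multiplicity r (Lcm B)" by linarith
  then have "r ^ k dvd a \<or> r ^ k dvd Lcm B"
    using power_dvd_iff_le_multiplicity[of a r k] power_dvd_iff_le_multiplicity[of "Lcm B" r k]
      a0 L0 nu by blast
  then show ?case using insert by blast
qed

theorem lemma3p10:
  fixes f :: "zhat \<Rightarrow> zhat" and p :: nat
  assumes "zhat_continuous f" and "cong_preserving f" and "prime p"
  shows "(period f p \<noteq> p \<longleftrightarrow> \<not> cyclic_perm (reduction f p) p)
       \<and> (\<not> cyclic_perm (reduction f p) p \<longleftrightarrow> (\<forall>x\<in>{0..<p}. cycle_len (reduction f p) x < p))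
       \<and> ((\<forall>x\<in>{0..<p}. cycle_len (reduction f p) x < p) \<longleftrightarrow> alpha (period f p) < p)"
proof -
  define g where "g = reduction f p"
  let ?A = "{0..<p}"
  define C where "C = cycle_len g ` ?A"
  have p1: "p > 1" using assms(3) prime_gt_1_nat by blast
  have per: "period f p = Lcm C" unfolding period_def C_def g_def by simp
  have M: "\<forall>y<p. g y < p"
  proof (intro allI impI)
    fix y assume "y < p"
    have "Rep_zhat (f (zhat_of_int (int y))) \<in> zhat_set" by (rule Rep_zhat)
    then have "0 \<le> Rep_zhat (f (zhat_of_int (int y))) p \<and> Rep_zhat (f (zhat_of_int (int y))) p < int p"
      using p1 unfolding zhat_set_def by auto
    then show "g y < p" unfolding g_def reduction_def by linarith
  qed
  have bnd: "\<forall>x\<in>?A. 1 \<le> cycle_len g x \<and> cycle_len g x \<le> p"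
    using cycle_len_bound[OF M] by auto
  have finC: "finite C" and C0: "0 \<notin> C" unfolding C_def using bnd by auto
  have L0: "Lcm C \<noteq> 0" using finC C0 Lcm_0_iff[of C] by auto
  let ?S = "{q. q dvd Lcm C \<and> (q = 1 \<or> primepow q)}"
  have finS: "finite ?S"
  proof (rule finite_subset[of _ "{..Lcm C}"])
    have Lpos: "0 < Lcm C" using L0 by simp
    then show "?S \<subseteq> {..Lcm C}" by (auto intro: dvd_imp_le)
  qed simp
  have alpha_eq: "alpha (period f p) = Max ?S" unfolding alpha_def per ..
  have P1: "Lcm C = p" if cyc: "cyclic_perm g p"
  proof -
    have "C = {p}" unfolding C_def using cyclic_len_p[OF cyc] p1 by force
    then show ?thesis by simp
  qed
  have P2: "\<forall>x\<in>?A. cycle_len g x < p" if ncyc: "\<not> cyclic_perm g p"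
    using bnd len_p_cyclic[OF M] ncyc by (meson atLeastLessThan_iff le_neq_implies_less)
  have P3: "Lcm C \<noteq> p \<and> alpha (period f p) < p" if all: "\<forall>x\<in>?A. cycle_len g x < p"
  proof
    have Cb: "\<forall>c\<in>C. 1 \<le> c \<and> c < p" using all bnd unfolding C_def by auto
    show "Lcm C \<noteq> p"
    proof
      assume "Lcm C = p"
      then have "p ^ 1 dvd Lcm C" by simp
      from pp_dvd_Lcm[OF finC C0 assms(3) _ this] obtain c where c: "c \<in> C" "p dvd c" by auto
      have "1 \<le> c" "c < p" using Cb c(1) by auto
      then have "p \<le> c" using dvd_imp_le[OF c(2)] by simp
      with \<open>c < p\<close> show False by simp
    qed
    have "\<forall>q\<in>?S. q < p"
    proof
      fix q assume q: "q \<in> ?S"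
      show "q < p"
      proof (cases "q = 1")
        case True then show ?thesis using p1 by simp
      next
        case False
        then obtain r k where rk: "prime r" "k > 0" "q = r ^ k" using q unfolding primepow_def by auto
        with q have "r ^ k dvd Lcm C" by simp
        from pp_dvd_Lcm[OF finC C0 rk(1,2) this] obtain c where c: "c \<in> C" "q dvd c"
          using rk(3) by blast
        have "1 \<le> c" "c < p" using Cb c(1) by auto
        then have "q \<le> c" using dvd_imp_le[OF c(2)] by simp
        with \<open>c < p\<close> show ?thesis by simp
      qed
    qed
    moreover have "?S \<noteq> {}" by auto
    ultimately show "alpha (period f p) < p" unfolding alpha_eq using Max_in[OF finS] by blast
  qed
  have P4: "cyclic_perm g p \<and> \<not> alpha (period f p) < p" if nall: "\<not> (\<forall>x\<in>?A. cycle_len g x < p)"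
  proof
    obtain x where x: "x < p" "cycle_len g x = p" using nall bnd by force
    show cyc: "cyclic_perm g p" using len_p_cyclic[OF M x] .
    have "p \<in> C" using x unfolding C_def by force
    then have "p dvd Lcm C" by (rule dvd_Lcm)
    then have "p \<in> ?S" using assms(3) by simp
    then have "p \<le> Max ?S" using finS by (rule Max_ge[rotated])
    then show "\<not> alpha (period f p) < p" unfolding alpha_eq by simp
  qed
  have gdef: "reduction f p = g" by (simp add: g_def)
  show ?thesis
  proof (cases "cyclic_perm g p")
    case True
    then have "\<not> (\<forall>x\<in>?A. cycle_len g x < p)" using cyclic_len_p[OF True] p1 by auto
    with P4 P1[OF True] True show ?thesis unfolding gdef per by simp
  next
    case False
    then have all: "\<forall>x\<in>?A. cycle_len g x < p" by (rule P2)
    with P3[OF all] False show ?thesis unfolding gdef per by simp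
  qed
qed

end
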